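(* Let $\underline{q}_g\le\bar{q}_g$ and $\underline{v}\le\bar{v}$ be real constants and let $v_0\in[\underline{v},\bar{v}]$. Define the set \[ S:=\{(q,v):\underline{q}_g\le q\le\bar{q}_g,\ v=v_0\}\cup\{(q,v):q=\bar{q}_g,\ \underline{v}\le v\le v_0\}\cup\{(q,v):q=\underline{q}_g,\ v_0\le v\le\bar{v}\}\subseteq\mathbb{R}^2, \] and, for $\epsilon>0$, let $S^\epsilon$ be the set of all $(q,v)\in\mathbb{R}^2$ for which there exist $v^+,v^-\in[0,\bar{v}-\underline{v}]$ such that \begin{align*} &v=v_0+v^+-v^-,\\ &v^+-\epsilon\ln\left[1+\exp\left(\frac{v^+-q+\underline{q}_g}{\epsilon}\right)\right]\le\epsilon\ln 2,\\ &v^--\epsilon\ln\left[1+\exp\left(\frac{v^-+q-\bar{q}_g}{\epsilon}\right)\right]\le\epsilon\ln 2,\\ &\underline{q}_g\le q\le\bar{q}_g,\quad \underline{v}\le v\le\bar{v}. \end{align*} Then for every $\epsilon>0$ we have $S\subseteq S^\epsilon$, and \[ \sup_{(q,v)\in S^\epsilon}\ \inf_{(q',v')\in S}\|(q,v)-(q',v')\|\to 0\quad\text{as }\epsilon\to 0. \]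
   Context: In the application, $q$ is the reactive power output of a generator in a contingency, $v$ the voltage magnitude at its bus in the contingency, $v_0$ the base-case voltage magnitude at that bus, $[\underline{q}_g,\bar{q}_g]$ the reactive power bounds and $[\underline{v},\bar{v}]$ the voltage bounds. The set $S$ models the disjunctive voltage/reactive-power response and $S^\epsilon$ is its smooth relaxation. *)

theory Defs
  imports "HOL-Analysis.Analysis"
begin

text \<open>Points (q,v) of the plane are modelled as real \<times> real, whose norm is the Euclidean one.\<close>

definition S_set :: "real \<Rightarrow> real \<Rightarrow> real \<Rightarrow> real \<Rightarrow> real \<Rightarrow> (real \<times> real) set" where
  "S_set qlo qhi vlo vhi v0 =
     {(q, v). qlo \<le> q \<and> q \<le> qhi \<and> v = v0}
   \<union> {(q, v). q = qhi \<and> vlo \<le> v \<and> v \<le> v0}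
   \<union> {(q, v). q = qlo \<and> v0 \<le> v \<and> v \<le> vhi}"

definition S_eps :: "real \<Rightarrow> real \<Rightarrow> real \<Rightarrow> real \<Rightarrow> real \<Rightarrow> real \<Rightarrow> (real \<times> real) set" where
  "S_eps qlo qhi vlo vhi v0 \<epsilon> =
     {(q, v). \<exists>vp vm. 0 \<le> vp \<and> vp \<le> vhi - vlo \<and> 0 \<le> vm \<and> vm \<le> vhi - vlo \<and>
        v = v0 + vp - vm \<and>
        vp - \<epsilon> * ln (1 + exp ((vp - q + qlo) / \<epsilon>)) \<le> \<epsilon> * ln 2 \<and>
        vm - \<epsilon> * ln (1 + exp ((vm + q - qhi) / \<epsilon>)) \<le> \<epsilon> * ln 2 \<and>
        qlo \<le> q \<and> q \<le> qhi \<and> vlo \<le> v \<and> v \<le> vhi}"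

end

theory Submission
  imports Defs
begin

lemma softplus_lb:
  fixes e t :: real assumes "e > 0"
  shows "max 0 t \<le> e * ln (1 + exp (t / e))"
proof -
  have p1: "0 < exp (t/e)" by simp
  have p2: "0 < 1 + exp (t/e)" by (smt (verit) exp_gt_zero)
  have "ln (exp (t/e)) \<le> ln (1 + exp (t / e))"
    using ln_le_cancel_iff[OF p1 p2] by simp
  hence a: "t/e \<le> ln (1 + exp (t / e))" by simp
  have b: "0 \<le> ln (1 + exp (t / e))" by simp
  from a assms have "t \<le> e * ln (1 + exp (t / e))" by (simp add: divide_le_eq mult.commute)
  with b assms show ?thesis by simp
qed

lemma softplus_pos:
  fixes e t :: real assumes "e > 0"
  shows "0 \<le> e * ln (1 + exp (t / e))"
  using assms by simp

lemma softplus_ub: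
  fixes e t :: real assumes "e > 0"
  shows "e * ln (1 + exp (t / e)) \<le> max 0 t + e * ln 2"
proof -
  define m where "m = max 0 (t / e)"
  have p2: "0 < 1 + exp (t/e)" by (smt (verit) exp_gt_zero)
  have x1: "1 \<le> exp m" "exp (t/e) \<le> exp m" unfolding m_def by auto
  hence le: "1 + exp (t/e) \<le> 2 * exp m" by linarith
  have "ln (1 + exp (t/e)) \<le> ln (2 * exp m)"
    using ln_le_cancel_iff[OF p2, of "2 * exp m"] le by simp
  also have "\<dots> = ln 2 + m" by (simp add: ln_mult)
  finally have "e * ln (1 + exp (t/e)) \<le> e * (ln 2 + m)"
    using assms by (simp add: mult_left_mono)
  also have "e * (ln 2 + m) = max 0 t + e * ln 2" unfolding m_def using assms
    by (simp add: max_def field_simps)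
  finally show ?thesis .
qed

lemma min_bound:
  fixes e x a :: real assumes "e > 0" and "x - e * ln (1 + exp ((x - a) / e)) \<le> e * ln 2"
  shows "x \<le> 2 * (e * ln 2) \<or> a \<le> 2 * (e * ln 2)"
  using softplus_ub[OF assms(1), of "x - a"] assms(2) by (smt (verit))

lemma dist_le_sum:
  fixes q v q' v' :: real
  shows "dist (q, v) (q', v') \<le> \<bar>q - q'\<bar> + \<bar>v - v'\<bar>"
  unfolding dist_Pair_Pair dist_real_def using sqrt_sum_squares_le_sum_abs[of "q-q'" "v-v'"] by simp

lemma infdist_le_sum:
  fixes q v q' v' :: real
  assumes "(q', v') \<in> A"
  shows "infdist (q, v) A \<le> \<bar>q - q'\<bar> + \<bar>v - v'\<bar>"
  using infdist_le[OF assms, of "(q,v)"] dist_le_sum[of q v q' v'] by linarith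

lemma S_sub:
  fixes qlo qhi vlo vhi v0 e :: real
  assumes "qlo \<le> qhi" and "vlo \<le> vhi" and "vlo \<le> v0" and "v0 \<le> vhi" and "e > 0"
  shows "S_set qlo qhi vlo vhi v0 \<subseteq> S_eps qlo qhi vlo vhi v0 e"
proof
  fix p assume "p \<in> S_set qlo qhi vlo vhi v0"
  then obtain q v where p: "p = (q, v)" and
    c: "(qlo \<le> q \<and> q \<le> qhi \<and> v = v0) \<or> (q = qhi \<and> vlo \<le> v \<and> v \<le> v0) \<or> (q = qlo \<and> v0 \<le> v \<and> v \<le> vhi)"
    unfolding S_set_def by auto
  have l2: "0 \<le> e * ln 2" using assms(5) by simp
  have pos: "\<And>t. 0 \<le> e * ln (1 + exp (t / e))" using softplus_pos[OF assms(5)] by blast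
  have lb: "\<And>t. t \<le> e * ln (1 + exp (t / e))" using softplus_lb[OF assms(5)] by (meson max.boundedE)
  have neg: "\<And>s. - (e * ln (1 + exp s)) \<le> e * ln 2"
  proof -
    fix s :: real
    have "0 \<le> e * ln (1 + exp s)" using assms(5) by simp
    thus "- (e * ln (1 + exp s)) \<le> e * ln 2" using l2 by linarith
  qed
  from c show "p \<in> S_eps qlo qhi vlo vhi v0 e"
  proof (elim disjE)
    assume h: "qlo \<le> q \<and> q \<le> qhi \<and> v = v0"
    show ?thesis unfolding S_eps_def p
      apply (simp only: mem_Collect_eq case_prod_conv, rule exI[of _ 0], rule exI[of _ 0])
      using h assms l2 pos[of "0 - q + qlo"] pos[of "0 + q - qhi"] by (auto simp: neg; linarith)
  next
    assume h: "q = qhi \<and> vlo \<le> v \<and> v \<le> v0"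
    show ?thesis unfolding S_eps_def p
      apply (simp only: mem_Collect_eq case_prod_conv, rule exI[of _ 0], rule exI[of _ "v0 - v"])
      using h assms l2 pos[of "0 - q + qlo"] lb[of "v0 - v + q - qhi"] by (auto simp: neg; linarith)
  next
    assume h: "q = qlo \<and> v0 \<le> v \<and> v \<le> vhi"
    show ?thesis unfolding S_eps_def p
      apply (simp only: mem_Collect_eq case_prod_conv, rule exI[of _ "v - v0"], rule exI[of _ 0])
      using h assms l2 pos[of "0 + q - qhi"] lb[of "v - v0 - q + qlo"] by (auto simp: neg; linarith)
  qed
qed

lemma dist_bound:
  fixes qlo qhi vlo vhi v0 e :: real
  assumes "qlo \<le> qhi" and "vlo \<le> vhi" and "vlo \<le> v0" and "v0 \<le> vhi" and "e > 0"
    and "p \<in> S_eps qlo qhi vlo vhi v0 e"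
  shows "infdist p (S_set qlo qhi vlo vhi v0) \<le> 4 * (e * ln 2)"
proof -
  define d where "d = 2 * (e * ln 2)"
  obtain q v vp vm where p: "p = (q, v)" and h: "0 \<le> vp" "vp \<le> vhi - vlo" "0 \<le> vm" "vm \<le> vhi - vlo"
     "v = v0 + vp - vm"
     "vp - e * ln (1 + exp ((vp - q + qlo) / e)) \<le> e * ln 2"
     "vm - e * ln (1 + exp ((vm + q - qhi) / e)) \<le> e * ln 2"
     "qlo \<le> q" "q \<le> qhi" "vlo \<le> v" "v \<le> vhi"
    using assms(6) unfolding S_eps_def by auto
  have A: "vp \<le> d \<or> q - qlo \<le> d" using min_bound[OF assms(5), of vp "q - qlo"] h(6)
    unfolding d_def by (simp add: algebra_simps)
  have B: "vm \<le> d \<or> qhi - q \<le> d" using min_bound[OF assms(5), of vm "qhi - q"] h(7)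
    unfolding d_def by (simp add: algebra_simps)
  have d0: "0 \<le> d" unfolding d_def using assms(5) by simp
  let ?S = "S_set qlo qhi vlo vhi v0"
  have m1: "(q, v0) \<in> ?S" using h unfolding S_set_def by auto
  have m2: "\<And>w. v0 \<le> w \<Longrightarrow> w \<le> vhi \<Longrightarrow> (qlo, w) \<in> ?S" unfolding S_set_def by auto
  have m3: "\<And>w. vlo \<le> w \<Longrightarrow> w \<le> v0 \<Longrightarrow> (qhi, w) \<in> ?S" unfolding S_set_def by auto
  have m4: "(qlo, v0) \<in> ?S" "(qhi, v0) \<in> ?S" using assms unfolding S_set_def by auto
  have "infdist (q, v) ?S \<le> 2 * d"
  proof (cases "vp \<le> d")
    case True
    show ?thesis
    proof (cases "vm \<le> d")
      case True
      show ?thesis using infdist_le_sum[OF m1, of q v] True \<open>vp \<le> d\<close> h d0 by auto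
    next
      case False
      hence q: "qhi - q \<le> d" using B by auto
      show ?thesis
      proof (cases "v \<le> v0")
        case True
        show ?thesis using infdist_le_sum[OF m3[of v], of q v] True q h d0 by auto
      next
        case False
        show ?thesis using infdist_le_sum[OF m4(2), of q v] False q h d0 \<open>vp \<le> d\<close> by auto
      qed
    qed
  next
    case False
    hence q: "q - qlo \<le> d" using A by auto
    show ?thesis
    proof (cases "v0 \<le> v")
      case True
      show ?thesis using infdist_le_sum[OF m2[of v], of q v] True q h d0 by auto
    next
      case v: False
      show ?thesis
      proof (cases "vm \<le> d")
        case True
        show ?thesis using infdist_le_sum[OF m4(1), of q v] v q h d0 True by auto
      next
        case False
        hence q2: "qhi - q \<le> d" using B by auto
        show ?thesis using infdist_le_sum[OF m3[of v], of q v] v q2 h d0 by auto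
      qed
    qed
  qed
  thus ?thesis using p d_def by simp
qed

theorem proposition2:
  fixes qlo qhi vlo vhi v0 :: real
  assumes "qlo \<le> qhi" and "vlo \<le> vhi" and "vlo \<le> v0" and "v0 \<le> vhi"
  shows "(\<forall>\<epsilon>>0. S_set qlo qhi vlo vhi v0 \<subseteq> S_eps qlo qhi vlo vhi v0 \<epsilon>) \<and>
         ((\<lambda>\<epsilon>. SUP p\<in>S_eps qlo qhi vlo vhi v0 \<epsilon>. infdist p (S_set qlo qhi vlo vhi v0))
            \<longlongrightarrow> 0) (at_right 0)"
proof
  show "\<forall>\<epsilon>>0. S_set qlo qhi vlo vhi v0 \<subseteq> S_eps qlo qhi vlo vhi v0 \<epsilon>"
    using S_sub[OF assms] by blast
  let ?F = "\<lambda>\<epsilon>. SUP p\<in>S_eps qlo qhi vlo vhi v0 \<epsilon>. infdist p (S_set qlo qhi vlo vhi v0)"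
  have bnd: "0 \<le> ?F e \<and> ?F e \<le> 4 * (e * ln 2)" if e: "e > 0" for e
  proof -
    have mem: "(qlo, v0) \<in> S_eps qlo qhi vlo vhi v0 e"
      using S_sub[OF assms e] assms unfolding S_set_def by auto
    hence ne: "S_eps qlo qhi vlo vhi v0 e \<noteq> {}" by auto
    have ub: "\<And>p. p \<in> S_eps qlo qhi vlo vhi v0 e \<Longrightarrow> infdist p (S_set qlo qhi vlo vhi v0) \<le> 4 * (e * ln 2)"
      using dist_bound[OF assms e] by blast
    have bdd: "bdd_above ((\<lambda>p. infdist p (S_set qlo qhi vlo vhi v0)) ` S_eps qlo qhi vlo vhi v0 e)"
      using ub by (intro bdd_aboveI2) 
    have "0 \<le> infdist (qlo, v0) (S_set qlo qhi vlo vhi v0)" by (rule infdist_nonneg)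
    also have "\<dots> \<le> ?F e" by (rule cSUP_upper[OF mem bdd])
    finally have "0 \<le> ?F e" .
    moreover have "?F e \<le> 4 * (e * ln 2)" using ne ub by (intro cSUP_least) auto
    ultimately show ?thesis by simp
  qed
  have lim: "((\<lambda>e::real. 4 * (e * ln 2)) \<longlongrightarrow> 0) (at_right 0)"
  proof -
    have "((\<lambda>e::real. 4 * (e * ln 2)) \<longlongrightarrow> 4 * (0 * ln 2)) (at_right 0)"
      by (intro tendsto_intros)
    thus ?thesis by simp
  qed
  show "(?F \<longlongrightarrow> 0) (at_right 0)"
  proof (rule real_tendsto_sandwich[OF _ _ tendsto_const lim])
    show "\<forall>\<^sub>F e in at_right 0. 0 \<le> ?F e"
      using bnd eventually_at_right_less[of 0] by (auto elim: eventually_mono)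
    show "\<forall>\<^sub>F e in at_right 0. ?F e \<le> 4 * (e * ln 2)"
      using bnd eventually_at_right_less[of 0] by (auto elim: eventually_mono)
  qed
qed

end
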